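(* Let $\mathbf{X}$ be a finite tournament isomorphic to an induced subtournament of $\mathbf{S}(2)$. Then there exists a finite tournament $\mathbf{Y}$ isomorphic to an induced subtournament of $\mathbf{S}(2)$ such that every extension of $\mathbf{X}$ in $\mathcal{P}_2$ embeds into every extension of $\mathbf{Y}$ in $\mathcal{P}_2$.
   Context: $\mathbf{S}(2)$ is the tournament whose vertices are the points of the unit circle of $\mathbb{C}$ with rational argument, with an arc from $x$ to $y$ iff $0<\arg(y/x)<\pi$. $\mathcal{P}_2$ is the class of finite structures $\mathbf{A}=(A,<^{\mathbf{A}},P_1^{\mathbf{A}},P_2^{\mathbf{A}})$ with $<^{\mathbf{A}}$ a linear order and $(P_1^{\mathbf{A}},P_2^{\mathbf{A}})$ a partition of $A$; an embedding is an isomorphism onto a substructure (order-preserving injection preserving $P_1$ and $P_2$). Writing $a\sim b$ when $a,b$ lie in the same part, $p(\mathbf{A})$ is the tournament on $A$ with an arc from $a$ to $b$ iff either ($a\sim b$ and $a<^{\mathbf{A}}b$) or ($a\not\sim b$ and $b<^{\mathbf{A}}a$). An extension of a tournament $\mathbf{X}$ is any $\mathbf{A}\in\mathcal{P}_2$ with $p(\mathbf{A})=\mathbf{X}$. *)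

theory Defs
  imports Complex_Main
begin

text \<open>Finite tournaments are given by a vertex set V and an arc relation E,
  only the restriction of E to V matters.\<close>

definition tournament :: "'a set \<Rightarrow> ('a \<Rightarrow> 'a \<Rightarrow> bool) \<Rightarrow> bool" where
  "tournament V E \<longleftrightarrow>
     (\<forall>a\<in>V. \<not> E a a) \<and>
     (\<forall>a\<in>V. \<forall>b\<in>V. a \<noteq> b \<longrightarrow> (E a b \<longleftrightarrow> \<not> E b a))"

definition S2_vertices :: "complex set" where
  "S2_vertices = {z. \<exists>q\<in>\<rat>. z = cis q}"

definition S2_arc :: "complex \<Rightarrow> complex \<Rightarrow> bool" where
  "S2_arc x y \<longleftrightarrow> 0 < Arg (y / x) \<and> Arg (y / x) < pi"

definition sub_S2 :: "'a set \<Rightarrow> ('a \<Rightarrow> 'a \<Rightarrow> bool) \<Rightarrow> bool" where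
  "sub_S2 V E \<longleftrightarrow> (\<exists>f. inj_on f V \<and> f ` V \<subseteq> S2_vertices \<and>
      (\<forall>a\<in>V. \<forall>b\<in>V. E a b \<longleftrightarrow> S2_arc (f a) (f b)))"

definition strict_linear_on :: "'a set \<Rightarrow> ('a \<Rightarrow> 'a \<Rightarrow> bool) \<Rightarrow> bool" where
  "strict_linear_on V lt \<longleftrightarrow>
     (\<forall>a\<in>V. \<not> lt a a) \<and>
     (\<forall>a\<in>V. \<forall>b\<in>V. \<forall>c\<in>V. lt a b \<longrightarrow> lt b c \<longrightarrow> lt a c) \<and>
     (\<forall>a\<in>V. \<forall>b\<in>V. a \<noteq> b \<longrightarrow> lt a b \<or> lt b a)"

text \<open>A structure of P_2 on the finite set V: linear order lt and a partition
  (P1, V - P1) of V.\<close>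

definition P2_struct :: "'a set \<Rightarrow> ('a \<Rightarrow> 'a \<Rightarrow> bool) \<Rightarrow> 'a set \<Rightarrow> bool" where
  "P2_struct V lt P1 \<longleftrightarrow> finite V \<and> strict_linear_on V lt \<and> P1 \<subseteq> V"

definition p_arc :: "('a \<Rightarrow> 'a \<Rightarrow> bool) \<Rightarrow> 'a set \<Rightarrow> 'a \<Rightarrow> 'a \<Rightarrow> bool" where
  "p_arc lt P1 a b \<longleftrightarrow>
     ((a \<in> P1 \<longleftrightarrow> b \<in> P1) \<and> lt a b) \<or> (\<not> (a \<in> P1 \<longleftrightarrow> b \<in> P1) \<and> lt b a)"

definition extension :: "'a set \<Rightarrow> ('a \<Rightarrow> 'a \<Rightarrow> bool) \<Rightarrow> ('a \<Rightarrow> 'a \<Rightarrow> bool) \<Rightarrow> 'a set \<Rightarrow> bool" where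
  "extension V E lt P1 \<longleftrightarrow> P2_struct V lt P1 \<and>
     (\<forall>a\<in>V. \<forall>b\<in>V. E a b \<longleftrightarrow> p_arc lt P1 a b)"

definition P2_embedding :: "'a set \<Rightarrow> ('a \<Rightarrow> 'a \<Rightarrow> bool) \<Rightarrow> 'a set \<Rightarrow>
    'b set \<Rightarrow> ('b \<Rightarrow> 'b \<Rightarrow> bool) \<Rightarrow> 'b set \<Rightarrow> ('a \<Rightarrow> 'b) \<Rightarrow> bool" where
  "P2_embedding V lt P1 W lt' P1' f \<longleftrightarrow>
     f ` V \<subseteq> W \<and> inj_on f V \<and>
     (\<forall>a\<in>V. \<forall>b\<in>V. lt a b \<longleftrightarrow> lt' (f a) (f b)) \<and>
     (\<forall>a\<in>V. a \<in> P1 \<longleftrightarrow> f a \<in> P1') \<and>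
     (\<forall>a\<in>V. a \<in> V - P1 \<longleftrightarrow> f a \<in> W - P1')"

end

theory Submission
  imports Defs
begin


lemma Arg_cis': "-pi < x \<Longrightarrow> x \<le> pi \<Longrightarrow> Arg (cis x) = x"
  by (rule cis_Arg_unique) (auto simp: sgn_div_norm)

lemma arc_cis:
  fixes d :: real
  assumes "-2*pi < d" "d < 2*pi"
  shows "(0 < Arg (cis d) \<and> Arg (cis d) < pi) \<longleftrightarrow> (0 < d \<and> d < pi) \<or> d < -pi"
proof -
  consider "-pi < d \<and> d \<le> pi" | "pi < d" | "d \<le> -pi" by linarith
  then show ?thesis
  proof cases
    case 1 then show ?thesis by (simp add: Arg_cis')
  next
    case 2
    have "cis d = cis (d - 2*pi)" by (simp add: cis_divide[symmetric])
    moreover have "Arg (cis (d - 2*pi)) = d - 2*pi" using 2 assms by (intro Arg_cis') auto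
    ultimately show ?thesis using 2 assms by auto
  next
    case 3
    have "cis d = cis (d + 2*pi)" by (simp add: cis_mult[symmetric])
    moreover have "Arg (cis (d + 2*pi)) = d + 2*pi" using 3 assms by (intro Arg_cis') auto
    ultimately show ?thesis using 3 assms by auto
  qed
qed

definition arcR :: "nat \<Rightarrow> nat \<Rightarrow> nat \<Rightarrow> bool" where
  "arcR n i j \<longleftrightarrow> (1 \<le> int j - int i \<and> int j - int i \<le> int n) \<or> int j - int i \<le> -(int n + 1)"

lemma arc_int:
  fixes c :: real and k :: int
  assumes c: "c > 0" "n * c < pi" "pi < (n+1) * c" and k: "\<bar>k\<bar> \<le> 2 * int n"
  shows "(0 < Arg (cis (k*c)) \<and> Arg (cis (k*c)) < pi) \<longleftrightarrow> (1 \<le> k \<and> k \<le> int n) \<or> k \<le> -(int n + 1)"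
proof -
  have kr: "\<bar>real_of_int k\<bar> \<le> 2 * real n" using k by linarith
  have "\<bar>k * c\<bar> \<le> 2 * real n * c" using kr c(1) by (simp add: abs_mult mult_right_mono)
  moreover have "2 * real n * c < 2 * pi" using c(2) by linarith
  ultimately have b: "-2*pi < k*c" "k*c < 2*pi" by (auto simp: abs_le_iff)
  consider "k \<ge> int n + 1" | "1 \<le> k \<and> k \<le> int n" | "k \<le> 0 \<and> k \<ge> - int n" | "k \<le> -(int n + 1)" by linarith
  then show ?thesis
  proof cases
    case 1
    hence "real_of_int k \<ge> real n + 1" by linarith
    hence "k*c \<ge> (real n + 1) * c" using c(1) by (intro mult_right_mono) auto
    hence "\<not> ((0 < k*c \<and> k*c < pi) \<or> k*c < -pi)" using c pi_gt_zero by linarith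
    then show ?thesis unfolding arc_cis[OF b] using 1 by auto
  next
    case 2
    hence "real_of_int k \<le> real n" "real_of_int k \<ge> 1" by linarith+
    hence "k*c \<le> real n * c" "k * c \<ge> 1 * c" using c(1) by (intro mult_right_mono; simp)+
    hence "((0 < k*c \<and> k*c < pi) \<or> k*c < -pi)" using c pi_gt_zero by linarith
    then show ?thesis unfolding arc_cis[OF b] using 2 by auto
  next
    case 3
    hence "real_of_int k \<ge> - real n" "real_of_int k \<le> 0" by linarith+
    hence "k*c \<ge> - real n * c" "k * c \<le> 0 * c" using c(1) by (intro mult_right_mono; simp)+
    hence "\<not> ((0 < k*c \<and> k*c < pi) \<or> k*c < -pi)" using c pi_gt_zero by linarith
    then show ?thesis unfolding arc_cis[OF b] using 3 by auto
  next
    case 4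
    hence "real_of_int k \<le> -(real n + 1)" by linarith
    hence "k*c \<le> -(real n + 1) * c" using c(1) by (intro mult_right_mono) auto
    hence "((0 < k*c \<and> k*c < pi) \<or> k*c < -pi)" using c pi_gt_zero by linarith
    then show ?thesis unfolding arc_cis[OF b] using 4 by auto
  qed
qed

lemma arc_nat:
  fixes c :: real
  assumes c: "c > 0" "n * c < pi" "pi < (n+1) * c" and ij: "i < 2*n+1" "j < 2*n+1"
  shows "(0 < Arg (cis (real j * c) / cis (real i * c)) \<and> Arg (cis (real j * c) / cis (real i * c)) < pi) \<longleftrightarrow> arcR n i j"
proof -
  have e: "cis (real j * c) / cis (real i * c) = cis (real_of_int (int j - int i) * c)"
    by (simp add: cis_divide left_diff_distrib)
  show ?thesis unfolding e arcR_def using ij by (intro arc_int[OF c]) auto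
qed


definition rk :: "('a \<Rightarrow> 'a \<Rightarrow> bool) \<Rightarrow> 'a set \<Rightarrow> 'a \<Rightarrow> nat" where
  "rk lt A x = card {u\<in>A. lt u x}"

lemma slin:
  assumes "strict_linear_on A lt"
  shows slin_irr: "x \<in> A \<Longrightarrow> \<not> lt x x"
    and slin_trans: "x \<in> A \<Longrightarrow> y \<in> A \<Longrightarrow> z \<in> A \<Longrightarrow> lt x y \<Longrightarrow> lt y z \<Longrightarrow> lt x z"
    and slin_tot: "x \<in> A \<Longrightarrow> y \<in> A \<Longrightarrow> x \<noteq> y \<Longrightarrow> lt x y \<or> lt y x"
  using assms unfolding strict_linear_on_def by blast+

lemma rk_mono:
  assumes "finite A" "strict_linear_on A lt" "x \<in> A" "y \<in> A" "lt x y"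
  shows "rk lt A x < rk lt A y"
proof -
  have sub: "{u\<in>A. lt u x} \<subseteq> {u\<in>A. lt u y}"
    using slin_trans[OF assms(2) _ assms(3,4) _ assms(5)] by blast
  have "x \<in> {u\<in>A. lt u y}" "x \<notin> {u\<in>A. lt u x}" using assms slin_irr[OF assms(2)] by auto
  then have "{u\<in>A. lt u x} \<subset> {u\<in>A. lt u y}" using sub by blast
  then show ?thesis unfolding rk_def using assms(1) by (intro psubset_card_mono) auto
qed

lemma rk_less:
  assumes "finite A" "strict_linear_on A lt" "x \<in> A" "y \<in> A"
  shows "lt x y \<longleftrightarrow> rk lt A x < rk lt A y"
proof
  assume "lt x y" then show "rk lt A x < rk lt A y" by (rule rk_mono[OF assms])
next
  assume r: "rk lt A x < rk lt A y"
  show "lt x y"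
  proof (rule ccontr)
    assume "\<not> lt x y"
    then have "x = y \<or> lt y x" using slin_tot[OF assms(2,3,4)] by blast
    then show False
    proof
      assume "x = y" then show False using r by simp
    next
      assume "lt y x" then have "rk lt A y < rk lt A x" by (rule rk_mono[OF assms(1,2,4,3)])
      then show False using r by simp
    qed
  qed
qed

lemma rk_bound:
  assumes "finite A" "strict_linear_on A lt" "x \<in> A"
  shows "rk lt A x < card A"
proof -
  have "x \<notin> {u\<in>A. lt u x}" using slin_irr[OF assms(2,3)] by blast
  then have "{u\<in>A. lt u x} \<subset> A" using assms(3) by blast
  then show ?thesis unfolding rk_def using assms(1) by (intro psubset_card_mono) auto
qed

lemma rk_inj:
  assumes "finite A" "strict_linear_on A lt"
  shows "inj_on (rk lt A) A"
proof (rule inj_onI)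
  fix x y assume "x \<in> A" "y \<in> A" "rk lt A x = rk lt A y"
  then show "x = y" using rk_mono[OF assms, of x y] rk_mono[OF assms, of y x] slin_tot[OF assms(2), of x y]
    by auto
qed

lemma rk_surj:
  assumes "finite A" "strict_linear_on A lt"
  shows "rk lt A ` A = {0..<card A}"
proof (rule card_subset_eq)
  show "finite {0..<card A}" by simp
  show "rk lt A ` A \<subseteq> {0..<card A}" using rk_bound[OF assms] by auto
  show "card (rk lt A ` A) = card {0..<card A}" using card_image[OF rk_inj[OF assms]] by simp
qed

lemma embed_alt:
  assumes V: "finite V" "strict_linear_on V lt"
    and W: "finite W" "strict_linear_on W lt'"
    and alt: "\<And>a b. a \<in> W \<Longrightarrow> b \<in> W \<Longrightarrow> lt' a b \<Longrightarrow> \<not> (\<exists>c\<in>W. lt' a c \<and> lt' c b) \<Longrightarrow>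
                 (a \<in> P1' \<longleftrightarrow> b \<notin> P1')"
    and card: "2 * card V < card W"
  shows "\<exists>f. P2_embedding V lt P1 W lt' P1' f"
proof -
  define r where "r = rk lt' W"
  define h where "h = inv_into W r"
  have hW: "h m \<in> W" and rh: "r (h m) = m" if "m < card W" for m
  proof -
    have "m \<in> r ` W" using rk_surj[OF W] that unfolding r_def by auto
    then show "h m \<in> W" "r (h m) = m" unfolding h_def by (auto intro: inv_into_into f_inv_into_f)
  qed
  have rl: "lt' x y \<longleftrightarrow> r x < r y" if "x \<in> W" "y \<in> W" for x y
    using rk_less[OF W that] unfolding r_def .
  have rb: "r x < card W" if "x \<in> W" for x using rk_bound[OF W that] unfolding r_def .
  have step: "h m \<in> P1' \<longleftrightarrow> h (Suc m) \<notin> P1'" if "Suc m < card W" for m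
  proof (rule alt)
    show "h m \<in> W" "h (Suc m) \<in> W" using hW that by auto
    show "lt' (h m) (h (Suc m))" using rl[of "h m" "h (Suc m)"] hW rh that by auto
    show "\<not> (\<exists>c\<in>W. lt' (h m) c \<and> lt' c (h (Suc m)))"
    proof
      assume "\<exists>c\<in>W. lt' (h m) c \<and> lt' c (h (Suc m))"
      then obtain c where "c \<in> W" "lt' (h m) c" "lt' c (h (Suc m))" by blast
      then have "m < r c" "r c < Suc m" using rl[of "h m" c] rl[of c "h (Suc m)"] hW rh that by auto
      then show False by simp
    qed
  qed
  have par: "m < card W \<Longrightarrow> (h m \<in> P1' \<longleftrightarrow> (even m \<longleftrightarrow> h 0 \<in> P1'))" for m
  proof (induction m)
    case 0 then show ?case by simp
  next
    case (Suc m) then show ?case using step[of m] by auto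
  qed
  define s where "s = rk lt V"
  define idx where "idx v = 2 * s v + (if (v \<in> P1 \<longleftrightarrow> h 0 \<in> P1') then 0 else 1)" for v
  have sb: "s v < card V" if "v \<in> V" for v using rk_bound[OF V that] unfolding s_def .
  have ib: "idx v < card W" if "v \<in> V" for v using sb[OF that] card unfolding idx_def by auto
  have ie: "even (idx v) \<longleftrightarrow> (v \<in> P1 \<longleftrightarrow> h 0 \<in> P1')" for v unfolding idx_def by auto
  have il: "s a < s b \<longleftrightarrow> idx a < idx b" if "a \<in> V" "b \<in> V" for a b
  proof (cases "s a = s b")
    case True
    then have "a = b" using rk_inj[OF V] that unfolding s_def inj_on_def by blast
    then show ?thesis by simp
  next
    case False
    then show ?thesis unfolding idx_def by auto
  qed
  define f where "f v = h (idx v)" for v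
  have fP: "f v \<in> P1' \<longleftrightarrow> v \<in> P1" if "v \<in> V" for v
    unfolding f_def using par[OF ib[OF that]] ie[of v] by auto
  have fW: "f v \<in> W" if "v \<in> V" for v unfolding f_def using hW ib that by auto
  have fl: "lt a b \<longleftrightarrow> lt' (f a) (f b)" if "a \<in> V" "b \<in> V" for a b
  proof -
    have "lt a b \<longleftrightarrow> s a < s b" using rk_less[OF V that] unfolding s_def .
    also have "\<dots> \<longleftrightarrow> idx a < idx b" by (rule il[OF that])
    also have "\<dots> \<longleftrightarrow> r (f a) < r (f b)" unfolding f_def using rh ib that by auto
    also have "\<dots> \<longleftrightarrow> lt' (f a) (f b)" using rl[of "f a" "f b"] hW ib that unfolding f_def by auto
    finally show ?thesis .
  qed
  have c1: "f ` V \<subseteq> W" using fW by blast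
  have c2: "inj_on f V"
  proof (rule inj_onI)
    fix a b assume ab: "a \<in> V" "b \<in> V" "f a = f b"
    have "r (h (idx a)) = r (h (idx b))" using ab(3) unfolding f_def by simp
    then have "idx a = idx b" using rh[OF ib[OF ab(1)]] rh[OF ib[OF ab(2)]] by simp
    then have "\<not> s a < s b" "\<not> s b < s a" using il[OF ab(1,2)] il[OF ab(2,1)] by simp_all
    then have "s a = s b" by simp
    then show "a = b" using rk_inj[OF V] ab(1,2) unfolding s_def inj_on_def by blast
  qed
  have c3: "\<forall>a\<in>V. \<forall>b\<in>V. lt a b \<longleftrightarrow> lt' (f a) (f b)" using fl by blast
  have c4: "\<forall>a\<in>V. a \<in> P1 \<longleftrightarrow> f a \<in> P1'" using fP by blast
  have c5: "\<forall>a\<in>V. a \<in> V - P1 \<longleftrightarrow> f a \<in> W - P1'" using fP fW by blast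
  have "P2_embedding V lt P1 W lt' P1' f"
    unfolding P2_embedding_def by (intro conjI c1 c2 c3 c4 c5)
  then show ?thesis by blast
qed

lemma twin:
  assumes ext: "extension W F lt' P1'" and ab: "a \<in> W" "b \<in> W" "lt' a b"
    and nb: "\<not> (\<exists>c\<in>W. lt' a c \<and> lt' c b)" and same: "a \<in> P1' \<longleftrightarrow> b \<in> P1'"
  shows "F a b" and "\<And>x. x \<in> W \<Longrightarrow> x \<noteq> a \<Longrightarrow> x \<noteq> b \<Longrightarrow> F a x \<longleftrightarrow> F b x"
proof -
  have E: "\<And>u v. u \<in> W \<Longrightarrow> v \<in> W \<Longrightarrow> F u v \<longleftrightarrow> p_arc lt' P1' u v"
    and L: "strict_linear_on W lt'" using ext unfolding extension_def P2_struct_def by auto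
  show "F a b" using E[OF ab(1,2)] ab same unfolding p_arc_def by auto
  fix x assume x: "x \<in> W" "x \<noteq> a" "x \<noteq> b"
  show "F a x \<longleftrightarrow> F b x" using E[OF ab(1) x(1)] E[OF ab(2) x(1)] L ab nb same x
    unfolding p_arc_def strict_linear_on_def by metis
qed

lemma witness:
  assumes "a < 2*n+1" "b < 2*n+1" "arcR n a b"
  shows "\<exists>x<2*n+1. x \<noteq> a \<and> x \<noteq> b \<and> \<not> arcR n a x \<and> arcR n b x"
proof -
  have n: "n \<ge> 1" using assms unfolding arcR_def by linarith
  show ?thesis
  proof (cases "a + n + 1 < 2*n+1 \<and> int b - int a \<le> int n \<and> int b > int a")
    case True
    then show ?thesis using assms n unfolding arcR_def by (intro exI[of _ "a+n+1"]) auto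
  next
    case False
    then have "a \<ge> n" using assms unfolding arcR_def by linarith
    then show ?thesis using assms n False unfolding arcR_def by (intro exI[of _ "a-n"]) auto
  qed
qed

theorem lemma3:
  fixes V :: "'a set" and E :: "'a \<Rightarrow> 'a \<Rightarrow> bool"
  assumes "finite V" and "tournament V E" and "sub_S2 V E"
  shows "\<exists>(W :: nat set) F. finite W \<and> tournament W F \<and> sub_S2 W F \<and>
           (\<forall>lt P1 lt' P1'. extension V E lt P1 \<longrightarrow> extension W F lt' P1' \<longrightarrow>
              (\<exists>f. P2_embedding V lt P1 W lt' P1' f))"
proof -
  define n where "n = card V"
  define W where "W = {0..<2*n+1}"
  define F where "F = arcR n"
  have fin: "finite W" unfolding W_def by simp
  have tour: "tournament W F" unfolding tournament_def W_def F_def arcR_def by auto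
  obtain c where cQ: "c \<in> \<rat>" and c1: "pi / (real n + 1) < c" and c2: "c < pi / (real n + 1/2)"
  proof -
    have "pi / (real n + 1) < pi / (real n + 1/2)" by (intro divide_strict_left_mono) auto
    then show ?thesis using Rats_dense_in_real that by blast
  qed
  have cpos: "c > 0" using c1 by (smt (verit) divide_pos_pos pi_gt_zero of_nat_0_le_iff)
  have "pi < (real n + 1) * c" using c1 by (simp add: field_simps)
  moreover have "(real n + 1/2) * c < pi" using c2 by (simp add: field_simps)
  moreover have "real n * c < (real n + 1/2) * c" using cpos by (intro mult_strict_right_mono) auto
  ultimately have cc: "real n * c < pi" "pi < (real n + 1) * c" by auto
  have arc: "S2_arc (cis (real i * c)) (cis (real j * c)) \<longleftrightarrow> arcR n i j" if "i \<in> W" "j \<in> W" for i j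
    unfolding S2_arc_def using arc_nat[OF cpos cc, of i j] that unfolding W_def by auto
  have sub: "sub_S2 W F" unfolding sub_S2_def
  proof (intro exI[of _ "\<lambda>i. cis (real i * c)"] conjI ballI)
    show "(\<lambda>i. cis (real i * c)) ` W \<subseteq> S2_vertices"
      unfolding S2_vertices_def using cQ by auto
    show "F a b \<longleftrightarrow> S2_arc (cis (real a * c)) (cis (real b * c))" if "a \<in> W" "b \<in> W" for a b
      using arc[OF that] unfolding F_def by simp
    show "inj_on (\<lambda>i. cis (real i * c)) W"
    proof (rule inj_onI)
      fix a b assume ab: "a \<in> W" "b \<in> W" "cis (real a * c) = cis (real b * c)"
      show "a = b"
      proof (rule ccontr)
        assume "a \<noteq> b"
        then have "arcR n a b \<or> arcR n b a" unfolding arcR_def using ab(1,2) unfolding W_def by auto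
        then have "S2_arc (cis (real a * c)) (cis (real a * c))" using arc ab by metis
        then show False unfolding S2_arc_def using Arg_cis'[of 0] by (simp add: cis_divide)
      qed
    qed
  qed
  have emb: "\<exists>f. P2_embedding V lt P1 W lt' P1' f"
    if e1: "extension V E lt P1" and e2: "extension W F lt' P1'" for lt P1 lt' P1'
  proof (rule embed_alt)
    show "finite V" "strict_linear_on V lt" using e1 unfolding extension_def P2_struct_def by auto
    show "finite W" "strict_linear_on W lt'" using e2 unfolding extension_def P2_struct_def by auto
    show "2 * card V < card W" unfolding W_def n_def by simp
    fix a b assume ab: "a \<in> W" "b \<in> W" "lt' a b" and nb: "\<not> (\<exists>c\<in>W. lt' a c \<and> lt' c b)"
    show "a \<in> P1' \<longleftrightarrow> b \<notin> P1'"
    proof (rule ccontr)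
      assume "\<not> (a \<in> P1' \<longleftrightarrow> b \<notin> P1')"
      then have same: "a \<in> P1' \<longleftrightarrow> b \<in> P1'" by blast
      have "F a b" using twin(1)[OF e2 ab nb same] .
      then obtain x where x: "x < 2*n+1" "x \<noteq> a" "x \<noteq> b" "\<not> arcR n a x" "arcR n b x"
        using witness[of a n b] ab unfolding F_def W_def by auto
      have "F a x \<longleftrightarrow> F b x" using twin(2)[OF e2 ab nb same, of x] x unfolding W_def by auto
      then show False using x unfolding F_def by auto
    qed
  qed
  show ?thesis using fin tour sub emb by blast
qed

end
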